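(* Let $\mathcal X\subseteq\mathcal Y$ be subcategories of $\mathcal C$ such that $\mathcal Y$ is closed under extensions and $\mathcal X$ is a generator of $\mathcal Y$. Let $n\ge1$ and suppose there are $\mathbb E$-triangles $K_{i+1}\to Y_i\to K_i\dashrightarrow$ for $1\le i\le n$ with $K_1=A$, $K_{n+1}=A'$ and all $Y_i\in\mathcal Y$. Then there exist objects $U_n,V_n\in\mathcal C$ such that $U_n\in\mathcal Y$, there is an $\mathbb E$-triangle $U_n\to V_n\to A'\dashrightarrow$, and there are $\mathbb E$-triangles $L_{i+1}\to X_i\to L_i\dashrightarrow$ for $1\le i\le n$ with $L_1=A$, $L_{n+1}=V_n$ and all $X_i\in\mathcal X$.
   Context: $(\mathcal C,\mathbb E,\mathfrak s)$ is an extriangulated category in the sense of Nakaoka–Palu, Krull–Schmidt, with enough projectives and enough injectives; subcategories are full, additive, closed under isomorphisms. Closed under extensions: for every $\mathbb E$-triangle $A\to B\to C\dashrightarrow$ with $A,C$ in the subcategory, $B$ is in it. A subcategory $\mathcal X$ is a generator for $\mathcal Y$ if $\mathcal X\subseteq\mathcal Y$ and every $Y\in\mathcal Y$ admits an $\mathbb E$-triangle $Y'\to X\to Y\dashrightarrow$ with $X\in\mathcal X$ and $Y'\in\mathcal Y$. *)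

theory Defs
  imports Main
begin

text \<open>Conventions:
  cmp C g f  is the composite g after f;
  Ext C Z A  is the abelian group E(Z,A) (extensions of Z by A);
  epush C Z a d  is a_* d  for d in E(Z, src a), giving an element of E(Z, trg a);
  epull C A c d  is c^* d  for d in E(trg c, A), giving an element of E(src c, A);
  realizes C d x y  means  s(d) = [A -x-> B -y-> Z], i.e. A -x-> B -y-> Z -d-> is an E-triangle.\<close>

record ('o, 'm, 'e) extri =
  obs :: "'o set"
  arrs :: "'m set"
  src :: "'m \<Rightarrow> 'o"
  trg :: "'m \<Rightarrow> 'o"
  cmp :: "'m \<Rightarrow> 'm \<Rightarrow> 'm"
  idm :: "'o \<Rightarrow> 'm"
  madd :: "'m \<Rightarrow> 'm \<Rightarrow> 'm"
  mneg :: "'m \<Rightarrow> 'm"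
  mzero :: "'o \<Rightarrow> 'o \<Rightarrow> 'm"
  Ext :: "'o \<Rightarrow> 'o \<Rightarrow> 'e set"
  eadd :: "'o \<Rightarrow> 'o \<Rightarrow> 'e \<Rightarrow> 'e \<Rightarrow> 'e"
  eneg :: "'o \<Rightarrow> 'o \<Rightarrow> 'e \<Rightarrow> 'e"
  ezero :: "'o \<Rightarrow> 'o \<Rightarrow> 'e"
  epush :: "'o \<Rightarrow> 'm \<Rightarrow> 'e \<Rightarrow> 'e"
  epull :: "'o \<Rightarrow> 'm \<Rightarrow> 'e \<Rightarrow> 'e"
  realizes :: "'e \<Rightarrow> 'm \<Rightarrow> 'm \<Rightarrow> bool"

definition hom :: "('o,'m,'e) extri \<Rightarrow> 'o \<Rightarrow> 'o \<Rightarrow> 'm set" where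
  "hom C A B = {f \<in> arrs C. src C f = A \<and> trg C f = B}"

definition is_category :: "('o,'m,'e) extri \<Rightarrow> bool" where
  "is_category C \<longleftrightarrow>
     (\<forall>f \<in> arrs C. src C f \<in> obs C \<and> trg C f \<in> obs C) \<and>
     (\<forall>A \<in> obs C. idm C A \<in> hom C A A) \<and>
     (\<forall>A B D f g. f \<in> hom C A B \<and> g \<in> hom C B D \<longrightarrow> cmp C g f \<in> hom C A D) \<and>
     (\<forall>A B f. f \<in> hom C A B \<longrightarrow> cmp C (idm C B) f = f \<and> cmp C f (idm C A) = f) \<and>
     (\<forall>A B D E f g h. f \<in> hom C A B \<and> g \<in> hom C B D \<and> h \<in> hom C D E \<longrightarrow>
        cmp C h (cmp C g f) = cmp C (cmp C h g) f)"

definition is_iso :: "('o,'m,'e) extri \<Rightarrow> 'm \<Rightarrow> bool" where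
  "is_iso C f \<longleftrightarrow> f \<in> arrs C \<and>
     (\<exists>g \<in> hom C (trg C f) (src C f). cmp C g f = idm C (src C f) \<and> cmp C f g = idm C (trg C f))"

definition iso_obs :: "('o,'m,'e) extri \<Rightarrow> 'o \<Rightarrow> 'o \<Rightarrow> bool" where
  "iso_obs C A B \<longleftrightarrow> (\<exists>f \<in> hom C A B. is_iso C f)"

definition is_zero_ob :: "('o,'m,'e) extri \<Rightarrow> 'o \<Rightarrow> bool" where
  "is_zero_ob C Z \<longleftrightarrow> Z \<in> obs C \<and>
     (\<forall>A \<in> obs C. hom C Z A = {mzero C Z A} \<and> hom C A Z = {mzero C A Z})"

definition is_biprod :: "('o,'m,'e) extri \<Rightarrow> 'o \<Rightarrow> 'o \<Rightarrow> 'o \<Rightarrow> 'm \<Rightarrow> 'm \<Rightarrow> 'm \<Rightarrow> 'm \<Rightarrow> bool" where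
  "is_biprod C A B S i1 p1 i2 p2 \<longleftrightarrow> S \<in> obs C \<and>
     i1 \<in> hom C A S \<and> p1 \<in> hom C S A \<and> i2 \<in> hom C B S \<and> p2 \<in> hom C S B \<and>
     cmp C p1 i1 = idm C A \<and> cmp C p2 i2 = idm C B \<and>
     cmp C p2 i1 = mzero C A B \<and> cmp C p1 i2 = mzero C B A \<and>
     madd C (cmp C i1 p1) (cmp C i2 p2) = idm C S"

definition is_additive :: "('o,'m,'e) extri \<Rightarrow> bool" where
  "is_additive C \<longleftrightarrow>
     (\<forall>A \<in> obs C. \<forall>B \<in> obs C. mzero C A B \<in> hom C A B) \<and>
     (\<forall>A B f g. f \<in> hom C A B \<and> g \<in> hom C A B \<longrightarrow> madd C f g \<in> hom C A B) \<and>
     (\<forall>A B f. f \<in> hom C A B \<longrightarrow> mneg C f \<in> hom C A B) \<and>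
     (\<forall>A B f g h. f \<in> hom C A B \<and> g \<in> hom C A B \<and> h \<in> hom C A B \<longrightarrow>
        madd C (madd C f g) h = madd C f (madd C g h)) \<and>
     (\<forall>A B f g. f \<in> hom C A B \<and> g \<in> hom C A B \<longrightarrow> madd C f g = madd C g f) \<and>
     (\<forall>A B f. f \<in> hom C A B \<longrightarrow> madd C f (mzero C A B) = f \<and> madd C f (mneg C f) = mzero C A B) \<and>
     (\<forall>A B D f g h. f \<in> hom C A B \<and> g \<in> hom C A B \<and> h \<in> hom C B D \<longrightarrow>
        cmp C h (madd C f g) = madd C (cmp C h f) (cmp C h g)) \<and>
     (\<forall>A B D f g h. f \<in> hom C A B \<and> g \<in> hom C A B \<and> h \<in> hom C D A \<longrightarrow>
        cmp C (madd C f g) h = madd C (cmp C f h) (cmp C g h)) \<and>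
     (\<exists>Z. is_zero_ob C Z) \<and>
     (\<forall>A \<in> obs C. \<forall>B \<in> obs C. \<exists>S i1 p1 i2 p2. is_biprod C A B S i1 p1 i2 p2)"

definition is_biadditive_functor :: "('o,'m,'e) extri \<Rightarrow> bool" where
  "is_biadditive_functor C \<longleftrightarrow>
     (\<forall>Z \<in> obs C. \<forall>A \<in> obs C. ezero C Z A \<in> Ext C Z A \<and>
        (\<forall>d \<in> Ext C Z A. \<forall>d' \<in> Ext C Z A. eadd C Z A d d' \<in> Ext C Z A) \<and>
        (\<forall>d \<in> Ext C Z A. eneg C Z A d \<in> Ext C Z A) \<and>
        (\<forall>d \<in> Ext C Z A. \<forall>d' \<in> Ext C Z A. \<forall>d'' \<in> Ext C Z A.
           eadd C Z A (eadd C Z A d d') d'' = eadd C Z A d (eadd C Z A d' d'')) \<and>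
        (\<forall>d \<in> Ext C Z A. \<forall>d' \<in> Ext C Z A. eadd C Z A d d' = eadd C Z A d' d) \<and>
        (\<forall>d \<in> Ext C Z A. eadd C Z A d (ezero C Z A) = d \<and>
           eadd C Z A d (eneg C Z A d) = ezero C Z A)) \<and>
     (\<forall>Z A A' a d. Z \<in> obs C \<and> a \<in> hom C A A' \<and> d \<in> Ext C Z A \<longrightarrow> epush C Z a d \<in> Ext C Z A') \<and>
     (\<forall>Z Z' A c d. A \<in> obs C \<and> c \<in> hom C Z' Z \<and> d \<in> Ext C Z A \<longrightarrow> epull C A c d \<in> Ext C Z' A) \<and>
     (\<forall>Z A d. Z \<in> obs C \<and> A \<in> obs C \<and> d \<in> Ext C Z A \<longrightarrow>
        epush C Z (idm C A) d = d \<and> epull C A (idm C Z) d = d) \<and>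
     (\<forall>Z A A' A'' a b d. Z \<in> obs C \<and> a \<in> hom C A A' \<and> b \<in> hom C A' A'' \<and> d \<in> Ext C Z A \<longrightarrow>
        epush C Z (cmp C b a) d = epush C Z b (epush C Z a d)) \<and>
     (\<forall>Z Z' Z'' A c c' d. A \<in> obs C \<and> c \<in> hom C Z' Z \<and> c' \<in> hom C Z'' Z' \<and> d \<in> Ext C Z A \<longrightarrow>
        epull C A (cmp C c c') d = epull C A c' (epull C A c d)) \<and>
     (\<forall>Z Z' A A' a c d. a \<in> hom C A A' \<and> c \<in> hom C Z' Z \<and> d \<in> Ext C Z A \<longrightarrow>
        epush C Z' a (epull C A c d) = epull C A' c (epush C Z a d)) \<and>
     (\<forall>Z A A' a d d'. Z \<in> obs C \<and> a \<in> hom C A A' \<and> d \<in> Ext C Z A \<and> d' \<in> Ext C Z A \<longrightarrow>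
        epush C Z a (eadd C Z A d d') = eadd C Z A' (epush C Z a d) (epush C Z a d')) \<and>
     (\<forall>Z Z' A c d d'. A \<in> obs C \<and> c \<in> hom C Z' Z \<and> d \<in> Ext C Z A \<and> d' \<in> Ext C Z A \<longrightarrow>
        epull C A c (eadd C Z A d d') = eadd C Z' A (epull C A c d) (epull C A c d')) \<and>
     (\<forall>Z A A' a a' d. Z \<in> obs C \<and> a \<in> hom C A A' \<and> a' \<in> hom C A A' \<and> d \<in> Ext C Z A \<longrightarrow>
        epush C Z (madd C a a') d = eadd C Z A' (epush C Z a d) (epush C Z a' d)) \<and>
     (\<forall>Z Z' A c c' d. A \<in> obs C \<and> c \<in> hom C Z' Z \<and> c' \<in> hom C Z' Z \<and> d \<in> Ext C Z A \<longrightarrow>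
        epull C A (madd C c c') d = eadd C Z' A (epull C A c d) (epull C A c' d))"

definition seq_equiv :: "('o,'m,'e) extri \<Rightarrow> 'm \<Rightarrow> 'm \<Rightarrow> 'm \<Rightarrow> 'm \<Rightarrow> bool" where
  "seq_equiv C x y x' y' \<longleftrightarrow>
     x \<in> arrs C \<and> y \<in> arrs C \<and> x' \<in> arrs C \<and> y' \<in> arrs C \<and>
     trg C x = src C y \<and> trg C x' = src C y' \<and>
     src C x = src C x' \<and> trg C y = trg C y' \<and>
     (\<exists>b \<in> hom C (trg C x) (trg C x'). is_iso C b \<and> cmp C b x = x' \<and> cmp C y' b = y)"

definition is_realization :: "('o,'m,'e) extri \<Rightarrow> bool" where
  "is_realization C \<longleftrightarrow>
     (\<forall>d x y. realizes C d x y \<longrightarrow> x \<in> arrs C \<and> y \<in> arrs C \<and> trg C x = src C y \<and>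
        d \<in> Ext C (trg C y) (src C x)) \<and>
     (\<forall>Z \<in> obs C. \<forall>A \<in> obs C. \<forall>d \<in> Ext C Z A.
        \<exists>x y. src C x = A \<and> trg C y = Z \<and> realizes C d x y) \<and>
     (\<forall>d x y x' y'. realizes C d x y \<longrightarrow> (realizes C d x' y' \<longleftrightarrow> seq_equiv C x y x' y')) \<and>
     (\<forall>d d' x y x' y' a c. realizes C d x y \<and> realizes C d' x' y' \<and>
        a \<in> hom C (src C x) (src C x') \<and> c \<in> hom C (trg C y) (trg C y') \<and>
        epush C (trg C y) a d = epull C (src C x') c d' \<longrightarrow>
        (\<exists>b \<in> hom C (trg C x) (trg C x'). cmp C b x = cmp C x' a \<and> cmp C y' b = cmp C c y))"

definition is_additive_realization :: "('o,'m,'e) extri \<Rightarrow> bool" where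
  "is_additive_realization C \<longleftrightarrow>
     (\<forall>A Z S i1 p1 i2 p2. is_biprod C A Z S i1 p1 i2 p2 \<longrightarrow> realizes C (ezero C Z A) i1 p2) \<and>
     (\<forall>d d' x y x' y' SA iA pA jA qA SB iB pB jB qB SZ iZ pZ jZ qZ.
        realizes C d x y \<and> realizes C d' x' y' \<and>
        is_biprod C (src C x) (src C x') SA iA pA jA qA \<and>
        is_biprod C (trg C x) (trg C x') SB iB pB jB qB \<and>
        is_biprod C (trg C y) (trg C y') SZ iZ pZ jZ qZ \<longrightarrow>
        realizes C
          (eadd C SZ SA (epush C SZ iA (epull C (src C x) pZ d))
                        (epush C SZ jA (epull C (src C x') qZ d')))
          (madd C (cmp C iB (cmp C x pA)) (cmp C jB (cmp C x' qA)))
          (madd C (cmp C iZ (cmp C y pB)) (cmp C jZ (cmp C y' qB))))"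

definition ET3 :: "('o,'m,'e) extri \<Rightarrow> bool" where
  "ET3 C \<longleftrightarrow>
     (\<forall>d d' x y x' y' a b. realizes C d x y \<and> realizes C d' x' y' \<and>
        a \<in> hom C (src C x) (src C x') \<and> b \<in> hom C (trg C x) (trg C x') \<and>
        cmp C b x = cmp C x' a \<longrightarrow>
        (\<exists>c \<in> hom C (trg C y) (trg C y'). cmp C c y = cmp C y' b \<and>
           epush C (trg C y) a d = epull C (src C x') c d'))"

definition ET3op :: "('o,'m,'e) extri \<Rightarrow> bool" where
  "ET3op C \<longleftrightarrow>
     (\<forall>d d' x y x' y' b c. realizes C d x y \<and> realizes C d' x' y' \<and>
        b \<in> hom C (trg C x) (trg C x') \<and> c \<in> hom C (trg C y) (trg C y') \<and>
        cmp C y' b = cmp C c y \<longrightarrow>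
        (\<exists>a \<in> hom C (src C x) (src C x'). cmp C x' a = cmp C b x \<and>
           epush C (trg C y) a d = epull C (src C x') c d'))"

text \<open>(ET4): for E-triangles A -f-> B -f'-> D -d-> and B -g-> C -g'-> F -d'->.\<close>
definition ET4 :: "('o,'m,'e) extri \<Rightarrow> bool" where
  "ET4 C \<longleftrightarrow>
     (\<forall>d d' f f' g g'. realizes C d f f' \<and> realizes C d' g g' \<and> trg C f = src C g \<longrightarrow>
        (\<exists>E h' dd e d''.
           h' \<in> hom C (trg C g) E \<and> dd \<in> hom C (trg C f') E \<and> e \<in> hom C E (trg C g') \<and>
           realizes C d'' (cmp C g f) h' \<and>
           realizes C (epush C (trg C g') f' d') dd e \<and>
           cmp C dd f' = cmp C h' g \<and> cmp C e h' = g' \<and>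
           epull C (src C f) dd d'' = d \<and>
           epush C E f d'' = epull C (trg C f) e d'))"

text \<open>(ET4op): for E-triangles D -p-> B -q-> A -d-> and F -r-> C -s-> B -d'->.\<close>
definition ET4op :: "('o,'m,'e) extri \<Rightarrow> bool" where
  "ET4op C \<longleftrightarrow>
     (\<forall>d d' p q r s. realizes C d p q \<and> realizes C d' r s \<and> trg C s = src C q \<longrightarrow>
        (\<exists>E h' dd e d''.
           h' \<in> hom C E (trg C r) \<and> dd \<in> hom C E (src C p) \<and> e \<in> hom C (src C r) E \<and>
           realizes C d'' h' (cmp C q s) \<and>
           realizes C (epull C (src C r) p d') e dd \<and>
           cmp C p dd = cmp C s h' \<and> cmp C h' e = r \<and>
           epush C (trg C q) dd d'' = d \<and>
           epull C E q d'' = epush C (trg C s) e d'))"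

definition is_extriangulated :: "('o,'m,'e) extri \<Rightarrow> bool" where
  "is_extriangulated C \<longleftrightarrow> is_category C \<and> is_additive C \<and> is_biadditive_functor C \<and>
     is_realization C \<and> is_additive_realization C \<and> ET3 C \<and> ET3op C \<and> ET4 C \<and> ET4op C"

definition etri :: "('o,'m,'e) extri \<Rightarrow> 'o \<Rightarrow> 'o \<Rightarrow> 'o \<Rightarrow> bool" where
  "etri C A B Z \<longleftrightarrow> (\<exists>d x y. x \<in> hom C A B \<and> y \<in> hom C B Z \<and> realizes C d x y)"

definition local_ob :: "('o,'m,'e) extri \<Rightarrow> 'o \<Rightarrow> bool" where
  "local_ob C X \<longleftrightarrow> X \<in> obs C \<and> idm C X \<noteq> mzero C X X \<and>
     (\<forall>f \<in> hom C X X. is_iso C f \<or> is_iso C (madd C (idm C X) (mneg C f)))"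

definition msum :: "('o,'m,'e) extri \<Rightarrow> 'o \<Rightarrow> 'o \<Rightarrow> 'm list \<Rightarrow> 'm" where
  "msum C A B fs = foldr (madd C) fs (mzero C A B)"

definition krull_schmidt :: "('o,'m,'e) extri \<Rightarrow> bool" where
  "krull_schmidt C \<longleftrightarrow> (\<forall>A \<in> obs C. \<exists>ds :: ('o \<times> 'm \<times> 'm) list.
     (\<forall>(X, i, p) \<in> set ds. local_ob C X \<and> i \<in> hom C X A \<and> p \<in> hom C A X) \<and>
     (\<forall>k < length ds. \<forall>l < length ds.
        cmp C (snd (snd (ds ! k))) (fst (snd (ds ! l))) =
          (if k = l then idm C (fst (ds ! k)) else mzero C (fst (ds ! l)) (fst (ds ! k)))) \<and>
     msum C A A (map (\<lambda>(X, i, p). cmp C i p) ds) = idm C A)"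

definition projective :: "('o,'m,'e) extri \<Rightarrow> 'o \<Rightarrow> bool" where
  "projective C P \<longleftrightarrow> P \<in> obs C \<and> (\<forall>d x y c. realizes C d x y \<and> c \<in> hom C P (trg C y) \<longrightarrow>
     (\<exists>b \<in> hom C P (src C y). cmp C y b = c))"

definition injective :: "('o,'m,'e) extri \<Rightarrow> 'o \<Rightarrow> bool" where
  "injective C I \<longleftrightarrow> I \<in> obs C \<and> (\<forall>d x y a. realizes C d x y \<and> a \<in> hom C (src C x) I \<longrightarrow>
     (\<exists>b \<in> hom C (trg C x) I. cmp C b x = a))"

definition enough_projectives :: "('o,'m,'e) extri \<Rightarrow> bool" where
  "enough_projectives C \<longleftrightarrow> (\<forall>Z \<in> obs C. \<exists>A P. projective C P \<and> etri C A P Z)"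

definition enough_injectives :: "('o,'m,'e) extri \<Rightarrow> bool" where
  "enough_injectives C \<longleftrightarrow> (\<forall>A \<in> obs C. \<exists>I Z. injective C I \<and> etri C A I Z)"

definition standing :: "('o,'m,'e) extri \<Rightarrow> bool" where
  "standing C \<longleftrightarrow> is_extriangulated C \<and> krull_schmidt C \<and>
     enough_projectives C \<and> enough_injectives C"

text \<open>Full additive subcategory closed under isomorphisms (given by its class of objects).\<close>
definition subcat :: "('o,'m,'e) extri \<Rightarrow> 'o set \<Rightarrow> bool" where
  "subcat C S \<longleftrightarrow> S \<subseteq> obs C \<and>
     (\<forall>A B. A \<in> S \<and> iso_obs C A B \<longrightarrow> B \<in> S) \<and>
     (\<exists>Z \<in> S. is_zero_ob C Z) \<and>
     (\<forall>A B S' i1 p1 i2 p2. A \<in> S \<and> B \<in> S \<and> is_biprod C A B S' i1 p1 i2 p2 \<longrightarrow> S' \<in> S)"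

definition ext_closed :: "('o,'m,'e) extri \<Rightarrow> 'o set \<Rightarrow> bool" where
  "ext_closed C S \<longleftrightarrow> (\<forall>A B Z. etri C A B Z \<and> A \<in> S \<and> Z \<in> S \<longrightarrow> B \<in> S)"

definition generator :: "('o,'m,'e) extri \<Rightarrow> 'o set \<Rightarrow> 'o set \<Rightarrow> bool" where
  "generator C X Y \<longleftrightarrow> X \<subseteq> Y \<and> (\<forall>Y0 \<in> Y. \<exists>Y' X0. X0 \<in> X \<and> Y' \<in> Y \<and> etri C Y' X0 Y0)"

end

theory Submission
  imports Defs
begin

context
  fixes C :: "('o,'m,'e) extri"
  assumes st: "standing C"
begin

lemma cat: "is_category C" and add: "is_additive C" and bif: "is_biadditive_functor C"
  and rea: "is_realization C" and area: "is_additive_realization C"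
  and et3: "ET3 C" and et4: "ET4 C" and et4op: "ET4op C"
  using st by (simp_all add: standing_def is_extriangulated_def)

lemma hom_obs: "f \<in> hom C A B \<Longrightarrow> A \<in> obs C \<and> B \<in> obs C"
  using cat by (auto simp: is_category_def hom_def)
lemma comp_hom: "f \<in> hom C A B \<Longrightarrow> g \<in> hom C B D \<Longrightarrow> cmp C g f \<in> hom C A D"
  using cat unfolding is_category_def by blast
lemma id_hom: "A \<in> obs C \<Longrightarrow> idm C A \<in> hom C A A"
  using cat unfolding is_category_def by blast
lemma id_l: "f \<in> hom C A B \<Longrightarrow> cmp C (idm C B) f = f"
  using cat unfolding is_category_def by blast
lemma id_r: "f \<in> hom C A B \<Longrightarrow> cmp C f (idm C A) = f"
  using cat unfolding is_category_def by blast
lemma assoc: "f \<in> hom C A B \<Longrightarrow> g \<in> hom C B D \<Longrightarrow> h \<in> hom C D E \<Longrightarrow>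
   cmp C h (cmp C g f) = cmp C (cmp C h g) f"
  using cat unfolding is_category_def by blast

lemma zero_hom: "A \<in> obs C \<Longrightarrow> B \<in> obs C \<Longrightarrow> mzero C A B \<in> hom C A B"
  using add unfolding is_additive_def by auto
lemma add_hom: "f \<in> hom C A B \<Longrightarrow> g \<in> hom C A B \<Longrightarrow> madd C f g \<in> hom C A B"
  using add unfolding is_additive_def by auto
lemma neg_hom: "f \<in> hom C A B \<Longrightarrow> mneg C f \<in> hom C A B"
  using add unfolding is_additive_def by auto
lemma add_assoc: "f \<in> hom C A B \<Longrightarrow> g \<in> hom C A B \<Longrightarrow> h \<in> hom C A B \<Longrightarrow>
        madd C (madd C f g) h = madd C f (madd C g h)"
  using add unfolding is_additive_def by auto
lemma add_comm: "f \<in> hom C A B \<Longrightarrow> g \<in> hom C A B \<Longrightarrow> madd C f g = madd C g f"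
  using add unfolding is_additive_def by auto
lemma add_0: "f \<in> hom C A B \<Longrightarrow> madd C f (mzero C A B) = f"
  using add unfolding is_additive_def by auto
lemma add_neg: "f \<in> hom C A B \<Longrightarrow> madd C f (mneg C f) = mzero C A B"
  using add unfolding is_additive_def by auto
lemma dist_l: "f \<in> hom C A B \<Longrightarrow> g \<in> hom C A B \<Longrightarrow> h \<in> hom C B D \<Longrightarrow>
        cmp C h (madd C f g) = madd C (cmp C h f) (cmp C h g)"
  using add unfolding is_additive_def by auto
lemma dist_r: "f \<in> hom C A B \<Longrightarrow> g \<in> hom C A B \<Longrightarrow> h \<in> hom C D A \<Longrightarrow>
        cmp C (madd C f g) h = madd C (cmp C f h) (cmp C g h)"
  using add unfolding is_additive_def by auto

lemmas hom_rules = comp_hom id_hom zero_hom add_hom neg_hom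

lemma add_cancel_r:
  assumes "f \<in> hom C A B" "g \<in> hom C A B" "h \<in> hom C A B" "madd C f h = madd C g h"
  shows "f = g"
proof -
  have e: "\<And>x. x \<in> hom C A B \<Longrightarrow> madd C (madd C x h) (mneg C h) = x"
  proof -
    fix x assume x: "x \<in> hom C A B"
    have "madd C (madd C x h) (mneg C h) = madd C x (madd C h (mneg C h))"
      using add_assoc[OF x assms(3) neg_hom[OF assms(3)]] .
    also have "\<dots> = x" using add_neg[OF assms(3)] add_0[OF x] by simp
    finally show "madd C (madd C x h) (mneg C h) = x" .
  qed
  have "f = madd C (madd C f h) (mneg C h)" using e[OF assms(1)] by simp
  also have "\<dots> = madd C (madd C g h) (mneg C h)" using assms(4) by simp
  also have "\<dots> = g" using e[OF assms(2)] .
  finally show ?thesis .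
qed

lemma zero_add: assumes "f \<in> hom C A B" shows "madd C (mzero C A B) f = f"
proof -
  have z: "mzero C A B \<in> hom C A B" using hom_obs[OF assms] zero_hom by blast
  show ?thesis using trans[OF add_comm[OF z assms] add_0[OF assms]] .
qed

lemma neg_unique:
  assumes "f \<in> hom C A B" "g \<in> hom C A B" "madd C f g = mzero C A B"
  shows "g = mneg C f"
proof -
  have "madd C (mneg C f) f = mzero C A B"
    using add_comm[OF neg_hom[OF assms(1)] assms(1)] add_neg[OF assms(1)] by simp
  then have "g = madd C (madd C (mneg C f) f) g"
    using zero_add[OF assms(2)] by simp
  also have "\<dots> = madd C (mneg C f) (madd C f g)"
    using add_assoc[OF neg_hom[OF assms(1)] assms(1) assms(2)] .
  also have "\<dots> = mneg C f" using assms(3) add_0[OF neg_hom[OF assms(1)]] by simp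
  finally show ?thesis .
qed

lemma comp_zero_r:
  assumes "h \<in> hom C B D" "A \<in> obs C"
  shows "cmp C h (mzero C A B) = mzero C A D"
proof -
  have B: "B \<in> obs C" "D \<in> obs C" using hom_obs assms by auto
  let ?z = "cmp C h (mzero C A B)"
  have zh: "?z \<in> hom C A D" using comp_hom[OF zero_hom[OF assms(2) B(1)] assms(1)] .
  have "?z = cmp C h (madd C (mzero C A B) (mzero C A B))"
    using add_0[OF zero_hom[OF assms(2) B(1)]] by simp
  also have "\<dots> = madd C ?z ?z" using dist_l[OF zero_hom[OF assms(2) B(1)] zero_hom[OF assms(2) B(1)] assms(1)] .
  finally have eq: "?z = madd C ?z ?z" .
  have "madd C ?z ?z = madd C (mzero C A D) ?z" using zero_add[OF zh] eq[symmetric] by simp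
  then show ?thesis using add_cancel_r[OF zh zero_hom zh] B assms by blast
qed

lemma comp_zero_l:
  assumes "f \<in> hom C A B" "D \<in> obs C"
  shows "cmp C (mzero C B D) f = mzero C A D"
proof -
  have B: "A \<in> obs C" "B \<in> obs C" using hom_obs assms by auto
  let ?z = "cmp C (mzero C B D) f"
  have zh: "?z \<in> hom C A D" using comp_hom[OF assms(1) zero_hom[OF B(2) assms(2)]] .
  have "?z = cmp C (madd C (mzero C B D) (mzero C B D)) f"
    using add_0[OF zero_hom[OF B(2) assms(2)]] by simp
  also have "\<dots> = madd C ?z ?z" using dist_r[OF zero_hom[OF B(2) assms(2)] zero_hom[OF B(2) assms(2)] assms(1)] .
  finally have eq: "?z = madd C ?z ?z" .
  have "madd C ?z ?z = madd C (mzero C A D) ?z" using zero_add[OF zh] eq[symmetric] by simp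
  then show ?thesis using add_cancel_r[OF zh zero_hom zh] B assms by blast
qed

lemma comp_neg_r:
  assumes "h \<in> hom C B D" "g \<in> hom C A B"
  shows "cmp C h (mneg C g) = mneg C (cmp C h g)"
proof -
  have o: "A \<in> obs C" using hom_obs assms by auto
  have "madd C (cmp C h g) (cmp C h (mneg C g)) = cmp C h (madd C g (mneg C g))"
    using dist_l[OF assms(2) neg_hom[OF assms(2)] assms(1)] by simp
  also have "\<dots> = mzero C A D" using add_neg[OF assms(2)] comp_zero_r[OF assms(1) o] by simp
  finally show ?thesis using neg_unique assms comp_hom neg_hom by blast
qed

lemma comp_neg_l:
  assumes "h \<in> hom C B D" "g \<in> hom C A B"
  shows "cmp C (mneg C h) g = mneg C (cmp C h g)"
proof -
  have o: "D \<in> obs C" using hom_obs assms by auto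
  have "madd C (cmp C h g) (cmp C (mneg C h) g) = cmp C (madd C h (mneg C h)) g"
    using dist_r[OF assms(1) neg_hom[OF assms(1)] assms(2)] by simp
  also have "\<dots> = mzero C A D" using add_neg[OF assms(1)] comp_zero_l[OF assms(2) o] by simp
  finally show ?thesis using neg_unique assms comp_hom neg_hom by blast
qed

lemma neg_zero: assumes "A \<in> obs C" "B \<in> obs C" shows "mneg C (mzero C A B) = mzero C A B"
proof -
  have z: "mzero C A B \<in> hom C A B" using zero_hom assms by blast
  show ?thesis by (rule sym[OF neg_unique[OF z z add_0[OF z]]])
qed


lemma biprod_ex: "A \<in> obs C \<Longrightarrow> B \<in> obs C \<Longrightarrow> \<exists>S i1 p1 i2 p2. is_biprod C A B S i1 p1 i2 p2"
  using add[unfolded is_additive_def, THEN conjunct2, THEN conjunct2, THEN conjunct2, THEN conjunct2, THEN conjunct2, THEN conjunct2, THEN conjunct2, THEN conjunct2, THEN conjunct2] by blast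

lemma grp:
  assumes "Z \<in> obs C" "A \<in> obs C"
  shows "ezero C Z A \<in> Ext C Z A \<and>
        (\<forall>d \<in> Ext C Z A. \<forall>d' \<in> Ext C Z A. eadd C Z A d d' \<in> Ext C Z A) \<and>
        (\<forall>d \<in> Ext C Z A. eneg C Z A d \<in> Ext C Z A) \<and>
        (\<forall>d \<in> Ext C Z A. \<forall>d' \<in> Ext C Z A. \<forall>d'' \<in> Ext C Z A.
           eadd C Z A (eadd C Z A d d') d'' = eadd C Z A d (eadd C Z A d' d'')) \<and>
        (\<forall>d \<in> Ext C Z A. \<forall>d' \<in> Ext C Z A. eadd C Z A d d' = eadd C Z A d' d) \<and>
        (\<forall>d \<in> Ext C Z A. eadd C Z A d (ezero C Z A) = d \<and>
           eadd C Z A d (eneg C Z A d) = ezero C Z A)"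
  by (rule bspec[OF bspec[OF bif[unfolded is_biadditive_functor_def, THEN conjunct1] assms(1)] assms(2)])

lemma ext_zero: "Z \<in> obs C \<Longrightarrow> A \<in> obs C \<Longrightarrow> ezero C Z A \<in> Ext C Z A"
  using grp by blast
lemma ext_add: "Z \<in> obs C \<Longrightarrow> A \<in> obs C \<Longrightarrow> d \<in> Ext C Z A \<Longrightarrow> d' \<in> Ext C Z A \<Longrightarrow> eadd C Z A d d' \<in> Ext C Z A"
  using grp by blast
lemma ext_neg: "Z \<in> obs C \<Longrightarrow> A \<in> obs C \<Longrightarrow> d \<in> Ext C Z A \<Longrightarrow> eneg C Z A d \<in> Ext C Z A"
  using grp by blast
lemma eadd_assoc: "Z \<in> obs C \<Longrightarrow> A \<in> obs C \<Longrightarrow> d \<in> Ext C Z A \<Longrightarrow> d' \<in> Ext C Z A \<Longrightarrow> d'' \<in> Ext C Z A \<Longrightarrow>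
   eadd C Z A (eadd C Z A d d') d'' = eadd C Z A d (eadd C Z A d' d'')"
proof -
  assume a: "Z \<in> obs C" "A \<in> obs C" "d \<in> Ext C Z A" "d' \<in> Ext C Z A" "d'' \<in> Ext C Z A"
  have "\<forall>d\<in>Ext C Z A. \<forall>d'\<in>Ext C Z A. \<forall>d''\<in>Ext C Z A.
           eadd C Z A (eadd C Z A d d') d'' = eadd C Z A d (eadd C Z A d' d'')"
    using grp[OF a(1,2)] by (elim conjE)
  then show ?thesis using a by blast
qed
lemma eadd_comm: "Z \<in> obs C \<Longrightarrow> A \<in> obs C \<Longrightarrow> d \<in> Ext C Z A \<Longrightarrow> d' \<in> Ext C Z A \<Longrightarrow> eadd C Z A d d' = eadd C Z A d' d"
proof -
  assume a: "Z \<in> obs C" "A \<in> obs C" "d \<in> Ext C Z A" "d' \<in> Ext C Z A"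
  have "\<forall>d\<in>Ext C Z A. \<forall>d'\<in>Ext C Z A. eadd C Z A d d' = eadd C Z A d' d"
    using grp[OF a(1,2)] by (elim conjE)
  then show ?thesis using a by blast
qed
lemma eadd_0: "Z \<in> obs C \<Longrightarrow> A \<in> obs C \<Longrightarrow> d \<in> Ext C Z A \<Longrightarrow> eadd C Z A d (ezero C Z A) = d"
  using grp by blast
lemma eadd_neg: "Z \<in> obs C \<Longrightarrow> A \<in> obs C \<Longrightarrow> d \<in> Ext C Z A \<Longrightarrow> eadd C Z A d (eneg C Z A d) = ezero C Z A"
  using grp by blast

lemma push_ext: "Z \<in> obs C \<Longrightarrow> a \<in> hom C A A' \<Longrightarrow> d \<in> Ext C Z A \<Longrightarrow> epush C Z a d \<in> Ext C Z A'"
  by (rule bif[unfolded is_biadditive_functor_def, THEN conjunct2, THEN conjunct1, rule_format], blast)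
lemma pull_ext: "A \<in> obs C \<Longrightarrow> c \<in> hom C Z' Z \<Longrightarrow> d \<in> Ext C Z A \<Longrightarrow> epull C A c d \<in> Ext C Z' A"
  by (rule bif[unfolded is_biadditive_functor_def, THEN conjunct2, THEN conjunct2, THEN conjunct1, rule_format], blast)
lemma push_id: "Z \<in> obs C \<Longrightarrow> A \<in> obs C \<Longrightarrow> d \<in> Ext C Z A \<Longrightarrow> epush C Z (idm C A) d = d"
  using bif[unfolded is_biadditive_functor_def, THEN conjunct2, THEN conjunct2, THEN conjunct2, THEN conjunct1] by blast
lemma pull_id: "Z \<in> obs C \<Longrightarrow> A \<in> obs C \<Longrightarrow> d \<in> Ext C Z A \<Longrightarrow> epull C A (idm C Z) d = d"
  using bif[unfolded is_biadditive_functor_def, THEN conjunct2, THEN conjunct2, THEN conjunct2, THEN conjunct1] by blast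
lemma push_comp: "Z \<in> obs C \<Longrightarrow> a \<in> hom C A A' \<Longrightarrow> b \<in> hom C A' A'' \<Longrightarrow> d \<in> Ext C Z A \<Longrightarrow>
   epush C Z (cmp C b a) d = epush C Z b (epush C Z a d)"
  by (rule bif[unfolded is_biadditive_functor_def, THEN conjunct2, THEN conjunct2, THEN conjunct2, THEN conjunct2, THEN conjunct1, rule_format], blast)
lemma pull_comp: "A \<in> obs C \<Longrightarrow> c \<in> hom C Z' Z \<Longrightarrow> c' \<in> hom C Z'' Z' \<Longrightarrow> d \<in> Ext C Z A \<Longrightarrow>
   epull C A (cmp C c c') d = epull C A c' (epull C A c d)"
  by (rule bif[unfolded is_biadditive_functor_def, THEN conjunct2, THEN conjunct2, THEN conjunct2, THEN conjunct2, THEN conjunct2, THEN conjunct1, rule_format], blast)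
lemma push_eadd: "Z \<in> obs C \<Longrightarrow> a \<in> hom C A A' \<Longrightarrow> d \<in> Ext C Z A \<Longrightarrow> d' \<in> Ext C Z A \<Longrightarrow>
   epush C Z a (eadd C Z A d d') = eadd C Z A' (epush C Z a d) (epush C Z a d')"
  by (rule bif[unfolded is_biadditive_functor_def, THEN conjunct2, THEN conjunct2, THEN conjunct2, THEN conjunct2, THEN conjunct2, THEN conjunct2, THEN conjunct2, THEN conjunct1, rule_format], blast)
lemma push_madd: "Z \<in> obs C \<Longrightarrow> a \<in> hom C A A' \<Longrightarrow> a' \<in> hom C A A' \<Longrightarrow> d \<in> Ext C Z A \<Longrightarrow>
   epush C Z (madd C a a') d = eadd C Z A' (epush C Z a d) (epush C Z a' d)"
  by (rule bif[unfolded is_biadditive_functor_def, THEN conjunct2, THEN conjunct2, THEN conjunct2, THEN conjunct2, THEN conjunct2, THEN conjunct2, THEN conjunct2, THEN conjunct2, THEN conjunct2, THEN conjunct1, rule_format], blast)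

lemma ext_idem:
  assumes o: "Z \<in> obs C" "A \<in> obs C" and e: "e \<in> Ext C Z A" and ee: "eadd C Z A e e = e"
  shows "e = ezero C Z A"
proof -
  have n: "eneg C Z A e \<in> Ext C Z A" using ext_neg[OF o e] .
  have "ezero C Z A = eadd C Z A e (eneg C Z A e)" using eadd_neg[OF o e] by simp
  also have "\<dots> = eadd C Z A (eadd C Z A e e) (eneg C Z A e)" using ee by simp
  also have "\<dots> = eadd C Z A e (eadd C Z A e (eneg C Z A e))" using eadd_assoc[OF o e e n] .
  also have "\<dots> = e" using eadd_neg[OF o e] eadd_0[OF o e] by simp
  finally show ?thesis by simp
qed

lemma push_zero:
  assumes o: "Z \<in> obs C" "A \<in> obs C" "A' \<in> obs C" and d: "d \<in> Ext C Z A"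
  shows "epush C Z (mzero C A A') d = ezero C Z A'"
proof -
  have z: "mzero C A A' \<in> hom C A A'" using zero_hom o by blast
  have e: "epush C Z (mzero C A A') d \<in> Ext C Z A'" using push_ext[OF o(1) z d] .
  have "epush C Z (mzero C A A') d = epush C Z (madd C (mzero C A A') (mzero C A A')) d"
    using add_0[OF z] by simp
  also have "\<dots> = eadd C Z A' (epush C Z (mzero C A A') d) (epush C Z (mzero C A A') d)"
    using push_madd[OF o(1) z z d] .
  finally have "epush C Z (mzero C A A') d = eadd C Z A' (epush C Z (mzero C A A') d) (epush C Z (mzero C A A') d)" .
  from this[symmetric] show ?thesis by (rule ext_idem[OF o(1) o(3) e])
qed

lemma rea_D: "realizes C d x y \<Longrightarrow> x \<in> arrs C \<and> y \<in> arrs C \<and> trg C x = src C y \<and> d \<in> Ext C (trg C y) (src C x)"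
  using rea unfolding is_realization_def by blast
lemma rea_ex: "Z \<in> obs C \<Longrightarrow> A \<in> obs C \<Longrightarrow> d \<in> Ext C Z A \<Longrightarrow> \<exists>x y. src C x = A \<and> trg C y = Z \<and> realizes C d x y"
  using rea unfolding is_realization_def by blast
lemma rea_seq: "realizes C d x y \<Longrightarrow> realizes C d x' y' \<longleftrightarrow> seq_equiv C x y x' y'"
  using rea unfolding is_realization_def by blast
lemma rea_mor: "realizes C d x y \<Longrightarrow> realizes C d' x' y' \<Longrightarrow>
   a \<in> hom C (src C x) (src C x') \<Longrightarrow> c \<in> hom C (trg C y) (trg C y') \<Longrightarrow>
   epush C (trg C y) a d = epull C (src C x') c d' \<Longrightarrow>
   \<exists>b \<in> hom C (trg C x) (trg C x'). cmp C b x = cmp C x' a \<and> cmp C y' b = cmp C c y"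
  using rea unfolding is_realization_def by blast
lemma split_rea: "is_biprod C A Z S i1 p1 i2 p2 \<Longrightarrow> realizes C (ezero C Z A) i1 p2"
  using area unfolding is_additive_realization_def by blast

lemma rea_hom: "realizes C d x y \<Longrightarrow> x \<in> hom C (src C x) (trg C x) \<and> y \<in> hom C (trg C x) (trg C y)"
  using rea_D by (auto simp: hom_def)

lemma hom_src: "f \<in> hom C A B \<Longrightarrow> src C f = A" by (simp add: hom_def)
lemma hom_trg: "f \<in> hom C A B \<Longrightarrow> trg C f = B" by (simp add: hom_def)
lemma hom_arr: "f \<in> hom C A B \<Longrightarrow> f \<in> arrs C" by (simp add: hom_def)

lemma etriE:
  assumes "etri C A B Z"
  obtains d x y where "x \<in> hom C A B" "y \<in> hom C B Z" "realizes C d x y"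
  using assms unfolding etri_def by blast

lemma exact:
  assumes r: "realizes C d x y" and x: "x \<in> hom C A B" and y: "y \<in> hom C B Z"
    and f: "f \<in> hom C B B'" and fx: "cmp C f x = mzero C A B'"
  shows "\<exists>c \<in> hom C Z B'. cmp C c y = f"
proof -
  have o: "A \<in> obs C" "B' \<in> obs C" using hom_obs x f by auto
  obtain S i1 p1 i2 p2 where bp: "is_biprod C A B' S i1 p1 i2 p2" using biprod_ex o by blast
  have h: "i1 \<in> hom C A S" "p1 \<in> hom C S A" "i2 \<in> hom C B' S" "p2 \<in> hom C S B'" "cmp C p2 i2 = idm C B'"
    using bp by (auto simp: is_biprod_def)
  have r2: "realizes C (ezero C B' A) i1 p2" using split_rea bp by blast
  have a: "mzero C A A \<in> hom C A A" using zero_hom o by blast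
  have b: "cmp C i2 f \<in> hom C B S" using comp_hom f h by blast
  have "cmp C (cmp C i2 f) x = cmp C i2 (cmp C f x)" using assoc[OF x f h(3)] by simp
  also have "\<dots> = mzero C A S" using fx comp_zero_r[OF h(3) o(1)] by simp
  also have "\<dots> = cmp C i1 (mzero C A A)" using comp_zero_r[OF h(1) o(1)] by simp
  finally have eq: "cmp C (cmp C i2 f) x = cmp C i1 (mzero C A A)" .
  have pre: "realizes C d x y \<and> realizes C (ezero C B' A) i1 p2 \<and>
        mzero C A A \<in> hom C (src C x) (src C i1) \<and> cmp C i2 f \<in> hom C (trg C x) (trg C i1) \<and>
        cmp C (cmp C i2 f) x = cmp C i1 (mzero C A A)"
    using r r2 a b eq x h by (simp add: hom_src hom_trg)
  obtain c where c: "c \<in> hom C (trg C y) (trg C p2)" "cmp C c y = cmp C p2 (cmp C i2 f)"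
    using et3[unfolded ET3_def, rule_format, OF pre] by blast
  have "cmp C p2 (cmp C i2 f) = f" using assoc[OF f h(3) h(4)] h(5) id_l[OF f] by simp
  then show ?thesis using c y h by (auto simp: hom_src hom_trg)
qed

lemma endo_iso:
  assumes r: "realizes C d x y" and x: "x \<in> hom C A B" and y: "y \<in> hom C B Z"
    and p: "p \<in> hom C B B" and px: "cmp C p x = x" and yp: "cmp C y p = y"
  shows "\<exists>q \<in> hom C B B. cmp C q p = idm C B \<and> cmp C p q = idm C B"
proof -
  have o: "A \<in> obs C" "B \<in> obs C" "Z \<in> obs C" using hom_obs x y by auto
  define I where "I = idm C B"
  have I: "I \<in> hom C B B" using id_hom o I_def by simp
  have nI: "mneg C I \<in> hom C B B" using neg_hom I .
  define N where "N = madd C p (mneg C I)"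
  have N: "N \<in> hom C B B" using add_hom p nI N_def by simp
  have "cmp C N x = madd C (cmp C p x) (cmp C (mneg C I) x)" using dist_r[OF p nI x] N_def by simp
  also have "\<dots> = madd C x (mneg C x)" using px comp_neg_l[OF I x] id_l[OF x] I_def by simp
  also have "\<dots> = mzero C A B" using add_neg[OF x] .
  finally have Nx: "cmp C N x = mzero C A B" .
  obtain c where c: "c \<in> hom C Z B" "cmp C c y = N" using exact[OF r x y N Nx] by blast
  have "cmp C y N = madd C (cmp C y p) (cmp C y (mneg C I))" using dist_l[OF p nI y] N_def by simp
  also have "\<dots> = madd C y (mneg C y)" using yp comp_neg_r[OF y I] id_r[OF y] I_def by simp
  also have "\<dots> = mzero C B Z" using add_neg[OF y] .
  finally have yN: "cmp C y N = mzero C B Z" .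
  have NN: "cmp C N N = mzero C B B"
  proof -
    have "cmp C N N = cmp C (cmp C c y) N" using c by simp
    also have "\<dots> = cmp C c (cmp C y N)" using assoc[OF N y c(1)] by simp
    also have "\<dots> = mzero C B B" using yN comp_zero_r[OF c(1) o(2)] by simp
    finally show ?thesis .
  qed
  have pN: "p = madd C N I"
  proof -
    have "madd C N I = madd C p (madd C (mneg C I) I)" using add_assoc[OF p nI I] N_def by simp
    also have "\<dots> = madd C p (mzero C B B)" using add_comm[OF nI I] add_neg[OF I] by simp
    also have "\<dots> = p" using add_0[OF p] .
    finally show ?thesis by simp
  qed
  have nN: "mneg C N \<in> hom C B B" using neg_hom N .
  define q where "q = madd C I (mneg C N)"
  have q: "q \<in> hom C B B" using add_hom I nN q_def by simp
  have z: "mzero C B B \<in> hom C B B" using zero_hom o by simp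
  have Nq: "cmp C N q = N"
  proof -
    have "cmp C N q = madd C (cmp C N I) (cmp C N (mneg C N))" using dist_l[OF I nN N] q_def by simp
    also have "\<dots> = madd C N (mneg C (mzero C B B))" using id_r[OF N] comp_neg_r[OF N N] NN I_def by simp
    also have "\<dots> = N" using neg_zero[OF o(2) o(2)] add_0[OF N] by simp
    finally show ?thesis .
  qed
  have qN: "cmp C q N = N"
  proof -
    have "cmp C q N = madd C (cmp C I N) (cmp C (mneg C N) N)" using dist_r[OF I nN N] q_def by simp
    also have "\<dots> = madd C N (mneg C (mzero C B B))" using id_l[OF N] comp_neg_l[OF N N] NN I_def by simp
    also have "\<dots> = N" using neg_zero[OF o(2) o(2)] add_0[OF N] by simp
    finally show ?thesis .
  qed
  have Nq1: "madd C N q = I"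
  proof -
    have "madd C N q = madd C N (madd C (mneg C N) I)" using add_comm[OF I nN] q_def by simp
    also have "\<dots> = madd C (madd C N (mneg C N)) I" using add_assoc[OF N nN I] by simp
    also have "\<dots> = I" using add_neg[OF N] zero_add[OF I] by simp
    finally show ?thesis .
  qed
  have "cmp C p q = madd C (cmp C N q) (cmp C I q)" using dist_r[OF N I q] pN by simp
  also have "\<dots> = I" using Nq id_l[OF q] Nq1 I_def by simp
  finally have pq: "cmp C p q = I" .
  have "cmp C q p = madd C (cmp C q N) (cmp C q I)" using dist_l[OF N I q] pN by simp
  also have "\<dots> = I" using qN id_r[OF q] Nq1 I_def by simp
  finally have qp: "cmp C q p = I" .
  show ?thesis using q pq qp unfolding I_def by blast
qed

lemma tt:
  assumes r: "realizes C d x y" and x: "x \<in> hom C A B" and y: "y \<in> hom C B Z"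
    and b: "b \<in> hom C Z Z'" and b': "b' \<in> hom C Z' Z"
    and bb: "cmp C b' b = idm C Z" "cmp C b b' = idm C Z'"
  shows "etri C A B Z'"
proof -
  have o: "A \<in> obs C" "B \<in> obs C" "Z \<in> obs C" "Z' \<in> obs C" using hom_obs x y b by auto
  have d: "d \<in> Ext C Z A" using rea_D[OF r] x y by (simp add: hom_def)
  define e where "e = epull C A b' d"
  have e: "e \<in> Ext C Z' A" using pull_ext[OF o(1) b' d] e_def by simp
  obtain x1 y1 where x1: "src C x1 = A" "trg C y1 = Z'" "realizes C e x1 y1"
    using rea_ex[OF o(4) o(1) e] by blast
  define B1 where "B1 = trg C x1"
  have h1: "x1 \<in> hom C A B1" "y1 \<in> hom C B1 Z'" using rea_D[OF x1(3)] x1 B1_def by (auto simp: hom_def)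
  have IA: "idm C A \<in> hom C A A" using id_hom o by simp
  have eq1: "epush C Z (idm C A) d = epull C A b e"
  proof -
    have "epull C A b e = epull C A (cmp C b' b) d" using pull_comp[OF o(1) b' b d] e_def by simp
    also have "\<dots> = d" using bb pull_id[OF o(3) o(1) d] by simp
    finally show ?thesis using push_id[OF o(3) o(1) d] by simp
  qed
  obtain g where g: "g \<in> hom C B B1" "cmp C g x = cmp C x1 (idm C A)" "cmp C y1 g = cmp C b y"
    using rea_mor[OF r x1(3), of "idm C A" b] eq1 IA b x y h1 by (auto simp: hom_src hom_trg)
  have eq2: "epush C Z' (idm C A) e = epull C A b' d"
    using push_id[OF o(4) o(1) e] e_def by simp
  obtain g' where g': "g' \<in> hom C B1 B" "cmp C g' x1 = cmp C x (idm C A)" "cmp C y g' = cmp C b' y1"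
    using rea_mor[OF x1(3) r, of "idm C A" b'] eq2 IA b' x y h1 by (auto simp: hom_src hom_trg)
  have gx: "cmp C g x = x1" using g id_r[OF h1(1)] by simp
  have gx': "cmp C g' x1 = x" using g' id_r[OF x] by simp
  define p where "p = cmp C g' g"
  have p: "p \<in> hom C B B" using comp_hom g g' p_def by blast
  have px: "cmp C p x = x" using assoc[OF x g(1) g'(1)] gx gx' p_def by simp
  have yp: "cmp C y p = y"
  proof -
    have "cmp C y p = cmp C (cmp C y g') g" using assoc[OF g(1) g'(1) y] p_def by simp
    also have "\<dots> = cmp C b' (cmp C y1 g)" using g' assoc[OF g(1) h1(2) b'] by simp
    also have "\<dots> = cmp C (cmp C b' b) y" using g assoc[OF y b b'] by simp
    also have "\<dots> = y" using bb id_l[OF y] by simp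
    finally show ?thesis .
  qed
  obtain pi where pi: "pi \<in> hom C B B" "cmp C pi p = idm C B" "cmp C p pi = idm C B"
    using endo_iso[OF r x y p px yp] by blast
  define q where "q = cmp C g g'"
  have q: "q \<in> hom C B1 B1" using comp_hom g g' q_def by blast
  have qx: "cmp C q x1 = x1" using assoc[OF h1(1) g'(1) g(1)] gx gx' q_def by simp
  have yq: "cmp C y1 q = y1"
  proof -
    have "cmp C y1 q = cmp C (cmp C y1 g) g'" using assoc[OF g'(1) g(1) h1(2)] q_def by simp
    also have "\<dots> = cmp C b (cmp C y g')" using g assoc[OF g'(1) y b] by simp
    also have "\<dots> = cmp C (cmp C b b') y1" using g' assoc[OF h1(2) b' b] by simp
    also have "\<dots> = y1" using bb id_l[OF h1(2)] by simp
    finally show ?thesis .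
  qed
  obtain qi where qi: "qi \<in> hom C B1 B1" "cmp C qi q = idm C B1" "cmp C q qi = idm C B1"
    using endo_iso[OF x1(3) h1 q qx yq] by blast
  define R where "R = cmp C g pi"
  define L where "L = cmp C qi g"
  have R: "R \<in> hom C B B1" using comp_hom pi g R_def by blast
  have L: "L \<in> hom C B B1" using comp_hom qi g L_def by blast
  have g'R: "cmp C g' R = idm C B" using assoc[OF pi(1) g(1) g'(1)] pi p_def R_def by simp
  have Lg': "cmp C L g' = idm C B1" using assoc[OF g'(1) g(1) qi(1)] qi q_def L_def by simp
  have "L = cmp C L (cmp C g' R)" using g'R id_r[OF L] by simp
  also have "\<dots> = cmp C (cmp C L g') R" using assoc[OF R g'(1) L] by simp
  also have "\<dots> = R" using Lg' id_l[OF R] by simp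
  finally have LR: "L = R" .
  have iso: "is_iso C g'" unfolding is_iso_def using g' R g'R Lg' LR
    by (auto simp: hom_src hom_trg hom_arr)
  have by_: "cmp C b y \<in> hom C B Z'" using comp_hom y b by blast
  have c3: "cmp C (cmp C b y) g' = y1"
  proof -
    have "cmp C (cmp C b y) g' = cmp C b (cmp C y g')" using assoc[OF g'(1) y b] by simp
    also have "\<dots> = cmp C (cmp C b b') y1" using g' assoc[OF h1(2) b' b] by simp
    also have "\<dots> = y1" using bb id_l[OF h1(2)] by simp
    finally show ?thesis .
  qed
  have "seq_equiv C x1 y1 x (cmp C b y)"
    unfolding seq_equiv_def using h1 x by_ g' iso gx' c3 x1
    by (auto simp: hom_src hom_trg hom_arr)
  then have "realizes C e x (cmp C b y)" using rea_seq[OF x1(3)] by blast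
  then show ?thesis unfolding etri_def using x by_ by blast
qed


lemma pb:
  assumes t1: "etri C U V K" and t2: "etri C K' Y K" and UY: "U \<in> YY" "Y \<in> YY"
    and sub: "subcat C YY" and ec: "ext_closed C YY"
  shows "\<exists>M. M \<in> YY \<and> etri C K' M V"
proof -
  obtain d1 u v where u: "u \<in> hom C U V" "v \<in> hom C V K" "realizes C d1 u v" using t1 unfolding etri_def by blast
  obtain d2 k y where k: "k \<in> hom C K' Y" "y \<in> hom C Y K" "realizes C d2 k y" using t2 unfolding etri_def by blast
  have o: "U \<in> obs C" "V \<in> obs C" "K \<in> obs C" "K' \<in> obs C" "Y \<in> obs C" using hom_obs u k by auto
  have d1: "d1 \<in> Ext C K U" using rea_D[OF u(3)] u by (simp add: hom_src hom_trg)
  have d2: "d2 \<in> Ext C K K'" using rea_D[OF k(3)] k by (simp add: hom_src hom_trg)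
  obtain SA iA pA jA qA where bp: "is_biprod C U K' SA iA pA jA qA" using biprod_ex o by blast
  have h: "iA \<in> hom C U SA" "pA \<in> hom C SA U" "jA \<in> hom C K' SA" "qA \<in> hom C SA K'"
    "cmp C pA iA = idm C U" "cmp C qA jA = idm C K'" "cmp C qA iA = mzero C U K'" "cmp C pA jA = mzero C K' U"
    "madd C (cmp C iA pA) (cmp C jA qA) = idm C SA" "SA \<in> obs C"
    using bp by (auto simp: is_biprod_def)
  have sw: "madd C (cmp C jA qA) (cmp C iA pA) = idm C SA"
    by (rule trans[OF add_comm[OF comp_hom[OF h(4) h(3)] comp_hom[OF h(2) h(1)]] h(9)])
  have bp2: "is_biprod C K' U SA jA qA iA pA"
    unfolding is_biprod_def using h(1-8) h(10) sw by (intro conjI) assumption+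
  have s1: "realizes C (ezero C U K') jA pA" using split_rea[OF bp2] .
  have s2: "realizes C (ezero C K' U) iA qA" using split_rea[OF bp] .
  have e1: "epush C K iA d1 \<in> Ext C K SA" using push_ext[OF o(3) h(1) d1] .
  have e2: "epush C K jA d2 \<in> Ext C K SA" using push_ext[OF o(3) h(3) d2] .
  define th where "th = eadd C K SA (epush C K iA d1) (epush C K jA d2)"
  have th: "th \<in> Ext C K SA" using ext_add[OF o(3) h(10) e1 e2] th_def by simp
  have pth: "epush C K pA th = d1"
  proof -
    have "epush C K pA th = eadd C K U (epush C K pA (epush C K iA d1)) (epush C K pA (epush C K jA d2))"
      using push_eadd[OF o(3) h(2) e1 e2] th_def by simp
    also have "\<dots> = eadd C K U (epush C K (cmp C pA iA) d1) (epush C K (cmp C pA jA) d2)"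
      using push_comp[OF o(3) h(1) h(2) d1] push_comp[OF o(3) h(3) h(2) d2] by simp
    also have "\<dots> = d1" using h(5,8) push_id[OF o(3) o(1) d1] push_zero[OF o(3) o(4) o(1) d2]
        eadd_0[OF o(3) o(1) d1] by simp
    finally show ?thesis .
  qed
  have qth: "epush C K qA th = d2"
  proof -
    have "epush C K qA th = eadd C K K' (epush C K qA (epush C K iA d1)) (epush C K qA (epush C K jA d2))"
      using push_eadd[OF o(3) h(4) e1 e2] th_def by simp
    also have "\<dots> = eadd C K K' (epush C K (cmp C qA iA) d1) (epush C K (cmp C qA jA) d2)"
      using push_comp[OF o(3) h(1) h(4) d1] push_comp[OF o(3) h(3) h(4) d2] by simp
    also have "\<dots> = eadd C K K' (ezero C K K') d2" using h(6,7) push_id[OF o(3) o(4) d2]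
        push_zero[OF o(3) o(1) o(4) d1] by simp
    also have "\<dots> = d2" using eadd_comm[OF o(3) o(4) ext_zero[OF o(3) o(4)] d2] eadd_0[OF o(3) o(4) d2] by simp
    finally show ?thesis .
  qed
  obtain mu nu where mn: "src C mu = SA" "trg C nu = K" "realizes C th mu nu"
    using rea_ex[OF o(3) h(10) th] by blast
  define M where "M = trg C mu"
  have mh: "mu \<in> hom C SA M" "nu \<in> hom C M K" using rea_D[OF mn(3)] mn M_def by (auto simp: hom_def)
  have pre1: "realizes C (ezero C U K') jA pA \<and> realizes C th mu nu \<and> trg C jA = src C mu"
    using s1 mn h(3) by (simp add: hom_trg)
  obtain E3 h3 dd e d3 where E3: "h3 \<in> hom C (trg C mu) E3" "dd \<in> hom C (trg C pA) E3"
      "e \<in> hom C E3 (trg C nu)" "realizes C d3 (cmp C mu jA) h3"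
      "realizes C (epush C (trg C nu) pA th) dd e"
    using et4[unfolded ET4_def, rule_format, OF pre1] by blast
  have E3': "h3 \<in> hom C M E3" "dd \<in> hom C U E3" "e \<in> hom C E3 K" "realizes C d1 dd e"
    using E3 M_def mn pth h(2) by (auto simp: hom_trg)
  have "seq_equiv C u v dd e" using rea_seq[OF u(3)] E3'(4) by blast
  then obtain c where c: "c \<in> hom C V E3" "is_iso C c"
    unfolding seq_equiv_def using u(1) E3'(2) by (auto simp: hom_def)
  then obtain c' where c': "c' \<in> hom C E3 V" "cmp C c' c = idm C V" "cmp C c c' = idm C E3"
    unfolding is_iso_def by (auto simp: hom_trg hom_src)
  have x3: "cmp C mu jA \<in> hom C K' M" using comp_hom h(3) mh(1) by blast
  have T1: "etri C K' M V" using tt[OF E3(4) x3 E3'(1) c'(1) c(1) c'(3) c'(2)] .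
  have pre2: "realizes C (ezero C K' U) iA qA \<and> realizes C th mu nu \<and> trg C iA = src C mu"
    using s2 mn h(1) by (simp add: hom_trg)
  obtain E4 h4 dd4 e4 d4 where E4: "h4 \<in> hom C (trg C mu) E4" "dd4 \<in> hom C (trg C qA) E4"
      "e4 \<in> hom C E4 (trg C nu)" "realizes C d4 (cmp C mu iA) h4"
      "realizes C (epush C (trg C nu) qA th) dd4 e4"
    using et4[unfolded ET4_def, rule_format, OF pre2] by blast
  have E4': "h4 \<in> hom C M E4" "dd4 \<in> hom C K' E4" "e4 \<in> hom C E4 K" "realizes C d2 dd4 e4"
    using E4 M_def mn qth h(4) by (auto simp: hom_trg)
  have "seq_equiv C k y dd4 e4" using rea_seq[OF k(3)] E4'(4) by blast
  then obtain c2 where c2: "c2 \<in> hom C Y E4" "is_iso C c2"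
    unfolding seq_equiv_def using k(1) E4'(2) by (auto simp: hom_def)
  have "E4 \<in> YY" using sub UY(2) c2 unfolding subcat_def iso_obs_def by blast
  moreover have "etri C U M E4" unfolding etri_def using E4(4) E4'(1) comp_hom[OF h(1) mh(1)] by blast
  ultimately have "M \<in> YY" using ec UY(1) unfolding ext_closed_def by blast
  then show ?thesis using T1 by blast
qed

lemma base_step:
  assumes t: "etri C K' M V" and MY: "M \<in> YY" and gen: "generator C XX YY"
  shows "\<exists>E X0 U. X0 \<in> XX \<and> U \<in> YY \<and> E \<in> obs C \<and> etri C E X0 V \<and> etri C U E K'"
proof -
  obtain d p q where p: "p \<in> hom C K' M" "q \<in> hom C M V" "realizes C d p q" using t unfolding etri_def by blast
  obtain Y' X0 where yx: "X0 \<in> XX" "Y' \<in> YY" "etri C Y' X0 M" using gen MY unfolding generator_def by blast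
  obtain d' r s where r: "r \<in> hom C Y' X0" "s \<in> hom C X0 M" "realizes C d' r s" using yx(3) unfolding etri_def by blast
  have pre: "realizes C d p q \<and> realizes C d' r s \<and> trg C s = src C q" using p r by (simp add: hom_src hom_trg)
  obtain E h' dd e d'' where E: "h' \<in> hom C E (trg C r)" "dd \<in> hom C E (src C p)" "e \<in> hom C (src C r) E"
     "realizes C d'' h' (cmp C q s)" "realizes C (epull C (src C r) p d') e dd"
    using et4op[unfolded ET4op_def, rule_format, OF pre] by blast
  have E': "h' \<in> hom C E X0" "dd \<in> hom C E K'" "e \<in> hom C Y' E" using E p r by (auto simp: hom_src hom_trg)
  have "etri C E X0 V" unfolding etri_def using E(4) E'(1) comp_hom[OF r(2) p(2)] by blast
  moreover have "etri C Y' E K'" unfolding etri_def using E(5) E' by blast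
  moreover have "E \<in> obs C" using hom_obs E'(1) by blast
  ultimately show ?thesis using yx by blast
qed

end

lemma main_gen:
  fixes C :: "('o, 'm, 'e) extri" and XX YY :: "'o set" and n :: nat
    and K Y :: "nat \<Rightarrow> 'o" and A :: 'o
  assumes st: "standing C"
    and sX: "subcat C XX" and sY: "subcat C YY" and XY: "XX \<subseteq> YY"
    and ec: "ext_closed C YY" and gen: "generator C XX YY"
    and n: "n \<ge> 1"
    and K1: "K 1 = A"
    and ch: "\<forall>i \<in> {1..n}. Y i \<in> YY \<and> etri C (K (Suc i)) (Y i) (K i)"
  shows "\<exists>U V. U \<in> obs C \<and> V \<in> obs C \<and> U \<in> YY \<and> etri C U V (K (Suc n)) \<and>
           (\<exists>L X. L 1 = A \<and> L (Suc n) = V \<and>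
              (\<forall>i \<in> {1..n}. X i \<in> XX \<and> etri C (L (Suc i)) (X i) (L i)))"
  using n ch
proof (induction n rule: nat_induct_at_least)
  case base
  have t: "etri C (K 2) (Y 1) A" "Y 1 \<in> YY" using base K1 by (auto simp: numeral_2_eq_2)
  obtain E X0 U where E: "X0 \<in> XX" "U \<in> YY" "E \<in> obs C" "etri C E X0 A" "etri C U E (K 2)"
    using base_step[OF st t(1) t(2) gen] by blast
  have "U \<in> obs C" using sY E(2) unfolding subcat_def by blast
  moreover have "\<exists>L X. L 1 = A \<and> L (Suc 1) = E \<and>
              (\<forall>i \<in> {1..1}. X i \<in> XX \<and> etri C (L (Suc i)) (X i) (L i))"
    by (rule exI[of _ "\<lambda>i. if i = 1 then A else E"], rule exI[of _ "\<lambda>i. X0"]) (use E in auto)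
  ultimately show ?case using E by (auto simp: numeral_2_eq_2)
next
  case (Suc m)
  have chm: "\<forall>i \<in> {1..m}. Y i \<in> YY \<and> etri C (K (Suc i)) (Y i) (K i)" using Suc.prems by auto
  obtain U V L X where IH: "U \<in> obs C" "V \<in> obs C" "U \<in> YY" "etri C U V (K (Suc m))"
      "L 1 = A" "L (Suc m) = V" "\<forall>i \<in> {1..m}. X i \<in> XX \<and> etri C (L (Suc i)) (X i) (L i)"
    using Suc.IH[OF chm] by blast
  have last: "Y (Suc m) \<in> YY" "etri C (K (Suc (Suc m))) (Y (Suc m)) (K (Suc m))"
    using Suc.prems Suc.hyps by auto
  obtain M where M: "M \<in> YY" "etri C (K (Suc (Suc m))) M V"
    using pb[OF st IH(4) last(2) IH(3) last(1) sY ec] by blast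
  obtain E X0 U' where E: "X0 \<in> XX" "U' \<in> YY" "E \<in> obs C" "etri C E X0 V" "etri C U' E (K (Suc (Suc m)))"
    using base_step[OF st M(2) M(1) gen] by blast
  have U': "U' \<in> obs C" using sY E(2) unfolding subcat_def by blast
  define L' where "L' = L(Suc (Suc m) := E)"
  define X' where "X' = X(Suc m := X0)"
  have "\<forall>i \<in> {1..Suc m}. X' i \<in> XX \<and> etri C (L' (Suc i)) (X' i) (L' i)"
  proof
    fix i assume i: "i \<in> {1..Suc m}"
    show "X' i \<in> XX \<and> etri C (L' (Suc i)) (X' i) (L' i)"
    proof (cases "i = Suc m")
      case True then show ?thesis using E IH(6) by (simp add: L'_def X'_def)
    next
      case False then have "i \<in> {1..m}" using i by auto
      then show ?thesis using IH(7) False by (auto simp: L'_def X'_def)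
    qed
  qed
  moreover have "L' 1 = A" "L' (Suc (Suc m)) = E" using IH(5) Suc.hyps by (auto simp: L'_def)
  ultimately show ?case using U' E by blast
qed

theorem lemma3p8:
  fixes C :: "('o, 'm, 'e) extri" and XX YY :: "'o set" and n :: nat
    and K Y :: "nat \<Rightarrow> 'o" and A A' :: 'o
  assumes "standing C"
    and "subcat C XX" and "subcat C YY" and "XX \<subseteq> YY"
    and "ext_closed C YY" and "generator C XX YY"
    and "n \<ge> 1"
    and "K 1 = A" and "K (Suc n) = A'"
    and "\<forall>i \<in> {1..n}. Y i \<in> YY \<and> etri C (K (Suc i)) (Y i) (K i)"
  shows "\<exists>U V. U \<in> obs C \<and> V \<in> obs C \<and> U \<in> YY \<and> etri C U V A' \<and>
           (\<exists>L X. L 1 = A \<and> L (Suc n) = V \<and>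
              (\<forall>i \<in> {1..n}. X i \<in> XX \<and> etri C (L (Suc i)) (X i) (L i)))"
  using main_gen[OF assms(1-8) assms(10)] assms(9) by simp

end
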